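(* For every positive integer $r$ and integers $0\le k\le n$, \[ q^{r\binom{k+1}{2}+(1-r)k}\,[r]_q^k\,[k]_{q^r}!\,S_r[n,k]=\sum_{\ell=0}^kq^{rk(k-\ell)}\,A^r_{n,\ell}(q)\,{n-\ell\brack k-\ell}_{q^r}. \]
   Context: $[k]_q=1+\dots+q^{k-1}$, $[0]_q=0$, $[k]_q!=\prod_{i=1}^k[i]_q$, ${n\brack k}_q=\frac{[n]_q!}{[k]_q![n-k]_q!}$; the subscript $q^r$ means $q$ replaced by $q^r$. The $r$-colored $q$-Stirling numbers of the second kind: $S_r[0,k]=\delta_{0k}$ and $S_r[n,k]=S_r[n-1,k-1]+[rk+1]_qS_r[n-1,k]$ for $n\ge1$. The colored permutation group $\mathbb{Z}_r\wr\mathfrak{S}_n$ consists of words $\pi=\pi_1^{z_1}\cdots\pi_n^{z_n}$ with $\pi_1\cdots\pi_n\in\mathfrak{S}_n$ and $z_i\in\{0,\dots,r-1\}$ ($k^0$ written $k$), totally ordered by $n^{r-1}<\dots<n^1<\dots<1^{r-1}<\dots<1^1<0<1<\dots<n$. With $\pi_0^{z_0}=0$, $\mathrm{Des}_r(\pi)=\{i\in\{0,\dots,n-1\}:\pi_i^{z_i}>\pi_{i+1}^{z_{i+1}}\}$, $\mathrm{des}_r(\pi)=|\mathrm{Des}_r(\pi)|$, $\mathrm{fmaj}_r(\pi)=r\sum_{i\in\mathrm{Des}_r(\pi)}i+\sum_iz_i$, and $A^r_{n,k}(q)$ is defined by $\sum_{\pi\in\mathbb{Z}_r\wr\mathfrak{S}_n}t^{\mathrm{des}_r(\pi)}q^{\mathrm{fmaj}_r(\pi)}=\sum_{k=0}^nA^r_{n,k}(q)t^k$.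 *)

theory Defs
  imports "HOL-Computational_Algebra.Polynomial" "HOL-Combinatorics.Permutations"
begin

definition qint :: "'a::comm_ring_1 \<Rightarrow> nat \<Rightarrow> 'a" where
  "qint q k = (\<Sum>i<k. q ^ i)"

definition qfact :: "'a::comm_ring_1 \<Rightarrow> nat \<Rightarrow> 'a" where
  "qfact q k = (\<Prod>i=1..k. qint q i)"

definition qbinom :: "'a::{comm_ring_1,idom_divide} \<Rightarrow> nat \<Rightarrow> nat \<Rightarrow> 'a" where
  "qbinom q n k = qfact q n div (qfact q k * qfact q (n - k))"

abbreviation qX :: "int poly" where "qX \<equiv> [:0, 1:]"

fun Scol :: "nat \<Rightarrow> nat \<Rightarrow> nat \<Rightarrow> int poly" where
  "Scol r 0 k = (if k = 0 then 1 else 0)"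
| "Scol r (Suc n) 0 = qint qX (r * 0 + 1) * Scol r n 0"
| "Scol r (Suc n) (Suc k) = Scol r n k + qint qX (r * Suc k + 1) * Scol r n (Suc k)"

text \<open>A colored letter a^c is the pair (a, c); the letter 0 is (0,0).
  Total order: n^(r-1) < ... < n^1 < ... < 1^(r-1) < ... < 1^1 < 0 < 1 < ... < n.\<close>
definition colored_less :: "nat \<times> nat \<Rightarrow> nat \<times> nat \<Rightarrow> bool" where
  "colored_less x y = (case x of (a, c) \<Rightarrow> case y of (b, d) \<Rightarrow>
      (c = 0 \<and> d = 0 \<and> a < b) \<or> (c > 0 \<and> d = 0) \<or>
      (c > 0 \<and> d > 0 \<and> (b < a \<or> (a = b \<and> d < c))))"

text \<open>An element of Z_r wr S_n is a pair (sigma, z): sigma a permutation of {1..n}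
  (so sigma 0 = 0), z a coloring of positions 1..n with values < r (z 0 = 0, and
  z vanishes outside {1..n}). Position i carries the colored letter (sigma i, z i);
  position 0 carries the letter 0 = (0,0).\<close>
definition colored_perms :: "nat \<Rightarrow> nat \<Rightarrow> ((nat \<Rightarrow> nat) \<times> (nat \<Rightarrow> nat)) set" where
  "colored_perms r n = {(\<sigma>, z). \<sigma> permutes {1..n} \<and>
      (\<forall>i\<in>{1..n}. z i < r) \<and> (\<forall>i. i \<notin> {1..n} \<longrightarrow> z i = 0)}"

definition Des_r :: "nat \<Rightarrow> (nat \<Rightarrow> nat) \<times> (nat \<Rightarrow> nat) \<Rightarrow> nat set" where
  "Des_r n p = (case p of (\<sigma>, z) \<Rightarrow>
      {i \<in> {0..<n}. colored_less (\<sigma> (Suc i), z (Suc i)) (\<sigma> i, z i)})"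

definition des_r :: "nat \<Rightarrow> (nat \<Rightarrow> nat) \<times> (nat \<Rightarrow> nat) \<Rightarrow> nat" where
  "des_r n p = card (Des_r n p)"

definition fmaj_r :: "nat \<Rightarrow> nat \<Rightarrow> (nat \<Rightarrow> nat) \<times> (nat \<Rightarrow> nat) \<Rightarrow> nat" where
  "fmaj_r r n p = r * (\<Sum>i\<in>Des_r n p. i) + (\<Sum>i=1..n. snd p i)"

definition Acol :: "nat \<Rightarrow> nat \<Rightarrow> nat \<Rightarrow> int poly" where
  "Acol r n k = (\<Sum>p\<in>{p \<in> colored_perms r n. des_r n p = k}. monom 1 (fmaj_r r n p))"

end

theory Submission
  imports Defs
begin

lemma qint_add: "qint Q (a + b) = qint Q a + Q ^ a * qint Q b"
  unfolding qint_def
proof (induction b)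
  case 0 then show ?case by simp
next
  case (Suc b) then show ?case by (simp add: algebra_simps power_add)
qed

lemma qint_Suc: "qint Q (Suc k) = qint Q k + Q ^ k"
  by (simp add: qint_def)

lemma qint_0[simp]: "qint Q 0 = 0" by (simp add: qint_def)

lemma qfact_Suc: "qfact Q (Suc k) = qfact Q k * qint Q (Suc k)"
  by (simp add: qfact_def)

lemma qfact_0[simp]: "qfact Q 0 = 1" by (simp add: qfact_def)

fun gb :: "'a::comm_ring_1 \<Rightarrow> nat \<Rightarrow> nat \<Rightarrow> 'a" where
  "gb Q N 0 = 1"
| "gb Q 0 (Suc k) = 0"
| "gb Q (Suc N) (Suc k) = gb Q N k + Q ^ Suc k * gb Q N (Suc k)"

lemma gb_zero: "N < k \<Longrightarrow> gb Q N k = 0"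
proof (induction N arbitrary: k)
  case 0 then show ?case by (cases k) auto
next
  case (Suc N) then show ?case by (cases k) auto
qed

lemma gb_self[simp]: "gb Q N N = 1"
  by (induction N) (auto simp: gb_zero)

lemma gb_fact: "k \<le> N \<Longrightarrow> gb Q N k * qfact Q k * qfact Q (N - k) = qfact Q N"
proof (induction N arbitrary: k)
  case 0 then show ?case by simp
next
  case (Suc N)
  show ?case
  proof (cases k)
    case 0 then show ?thesis by simp
  next
    case (Suc k')
    have k': "k' \<le> N" using Suc.prems Suc by simp
    have A: "gb Q N k' * qfact Q (Suc k') * qfact Q (N - k') = qfact Q N * qint Q (Suc k')"
    proof -
      have "gb Q N k' * qfact Q (Suc k') * qfact Q (N - k') = (gb Q N k' * qfact Q k' * qfact Q (N - k')) * qint Q (Suc k')"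
        by (simp add: qfact_Suc ac_simps)
      then show ?thesis using Suc.IH[OF k'] by simp
    qed
    have B: "Q ^ Suc k' * gb Q N (Suc k') * qfact Q (Suc k') * qfact Q (N - k')
        = qfact Q N * (Q ^ Suc k' * qint Q (N - k'))"
    proof (cases "k' = N")
      case True then show ?thesis by (simp add: gb_zero)
    next
      case False
      then have kk: "Suc k' \<le> N" using k' by simp
      have e: "N - k' = Suc (N - Suc k')" using kk by simp
      have "Q ^ Suc k' * gb Q N (Suc k') * qfact Q (Suc k') * qfact Q (N - k')
          = Q ^ Suc k' * qint Q (N - k') * (gb Q N (Suc k') * qfact Q (Suc k') * qfact Q (N - Suc k'))"
        by (subst e, subst qfact_Suc, subst e[symmetric]) (simp add: algebra_simps)
      also have "\<dots> = Q ^ Suc k' * qint Q (N - k') * qfact Q N" using Suc.IH[OF kk] by simp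
      finally show ?thesis by (simp add: algebra_simps)
    qed
    have C: "qint Q (Suc k') + Q ^ Suc k' * qint Q (N - k') = qint Q (Suc N)"
      using qint_add[of Q "Suc k'" "N - k'"] k' by simp
    have "gb Q (Suc N) k * qfact Q k * qfact Q (Suc N - k)
       = gb Q N k' * qfact Q (Suc k') * qfact Q (N - k') + Q ^ Suc k' * gb Q N (Suc k') * qfact Q (Suc k') * qfact Q (N - k')"
      using Suc by (simp add: algebra_simps)
    also have "\<dots> = qfact Q N * (qint Q (Suc k') + Q ^ Suc k' * qint Q (N - k'))"
      using A B by (simp add: algebra_simps)
    also have "\<dots> = qfact Q (Suc N)" using C by (simp add: qfact_Suc)
    finally show ?thesis .
  qed
qed

lemma poly_qint_1: "poly (qint (qX ^ r) i) 1 = int i"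
  by (simp add: qint_def poly_sum)

lemma qint_nz: "i > 0 \<Longrightarrow> qint (qX ^ r) i \<noteq> 0"
  using poly_qint_1[of r i] by auto

lemma qfact_nz: "qfact (qX ^ r) k \<noteq> 0"
  unfolding qfact_def by (subst prod_zero_iff) (use qint_nz[of _ r] in force)+

lemma qbinom_gb: "k \<le> N \<Longrightarrow> qbinom (qX ^ r) N k = gb (qX ^ r) N k"
  unfolding qbinom_def using gb_fact[of k N "qX ^ r", symmetric] qfact_nz[of r]
  by (simp add: mult.assoc)

lemma gb_sym: "k \<le> N \<Longrightarrow> gb (qX ^ r) N k = gb (qX ^ r) N (N - k)"
proof -
  assume k: "k \<le> N"
  have "gb (qX ^ r) N k * (qfact (qX ^ r) k * qfact (qX ^ r) (N - k))
      = gb (qX ^ r) N (N - k) * (qfact (qX ^ r) k * qfact (qX ^ r) (N - k))"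
    using gb_fact[OF k, of "qX ^ r"] gb_fact[of "N - k" N "qX ^ r"] k
    by (simp add: algebra_simps)
  then show ?thesis using qfact_nz[of r] by simp
qed

lemma gb_pascal2: "gb (qX ^ r) (Suc N) (Suc k) = (qX ^ r) ^ (N - k) * gb (qX ^ r) N k + gb (qX ^ r) N (Suc k)"
proof (cases "k \<le> N")
  case False then show ?thesis by (simp add: gb_zero)
next
  case True
  show ?thesis
  proof (cases "k = N")
    case True then show ?thesis by (simp add: gb_zero)
  next
    case False
    then have kN: "k < N" using True by simp
    have e: "Suc N - Suc k = Suc (N - Suc k)" using kN by simp
    have "gb (qX ^ r) (Suc N) (Suc k) = gb (qX ^ r) (Suc N) (Suc (N - Suc k))"
      using gb_sym[of "Suc k" "Suc N" r] kN e by simp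
    also have "\<dots> = gb (qX ^ r) N (N - Suc k) + (qX ^ r) ^ (N - k) * gb (qX ^ r) N (N - k)"
      using gb.simps(3)[of "qX ^ r" N "N - Suc k"] kN by (simp only: Suc_diff_Suc)
    also have "gb (qX ^ r) N (N - Suc k) = gb (qX ^ r) N (Suc k)"
      using gb_sym[of "Suc k" N r] kN by simp
    also have "gb (qX ^ r) N (N - k) = gb (qX ^ r) N k"
      using gb_sym[of k N r] kN by simp
    finally show ?thesis by (simp add: algebra_simps)
  qed
qed


lemma qint_mult: "qint q (a * b) = qint q a * qint (q ^ a) b"
proof (induction b)
  case 0 then show ?case by simp
next
  case (Suc b)
  have "qint q (a * Suc b) = qint q (a * b + a)" by (simp add: algebra_simps)
  also have "\<dots> = qint q (a * b) + q ^ (a * b) * qint q a" by (rule qint_add)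
  also have "\<dots> = qint q a * qint (q ^ a) (Suc b)"
    using Suc by (simp add: qint_Suc algebra_simps power_mult)
  finally show ?case .
qed

definition cst :: "nat \<Rightarrow> nat \<Rightarrow> nat \<Rightarrow> int poly" where
  "cst r m k = (\<Prod>i<k. qint qX (r * m + 1) - qint qX (r * i + 1))"

lemma Scol_zero: "n < k \<Longrightarrow> Scol r n k = 0"
proof (induction n arbitrary: k)
  case 0 then show ?case by simp
next
  case (Suc n) then show ?case by (cases k) auto
qed

lemma qint_1[simp]: "qint q (Suc 0) = 1" by (simp add: qint_def)

lemma stirling_expand:
  "qint qX (r * m + 1) ^ n = (\<Sum>k\<le>n. Scol r n k * cst r m k)"
proof (induction n)
  case 0 then show ?case by (simp add: cst_def)
next
  case (Suc n)
  define x where "x = qint qX (r * m + 1)"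
  define f where "f k = Scol r n k" for k
  define c where "c k = cst r m k" for k
  define g where "g k = qint qX (r * k + 1) * f k * c k" for k
  have cS: "c (Suc k) = c k * (x - qint qX (r * k + 1))" for k
    by (simp add: c_def cst_def x_def)
  have f0: "f (Suc n) = 0" by (simp add: f_def Scol_zero)
  have "(\<Sum>k\<le>Suc n. Scol r (Suc n) k * cst r m k)
      = f 0 * c 0 + (\<Sum>k\<le>n. f k * c (Suc k)) + (\<Sum>k\<le>n. g (Suc k))"
    by (subst sum.atMost_Suc_shift) (simp add: f_def c_def g_def algebra_simps sum.distrib)
  also have "(\<Sum>k\<le>n. g (Suc k)) = (\<Sum>k\<le>n. g k) - g 0"
  proof -
    have "(\<Sum>k\<le>Suc n. g k) = g 0 + (\<Sum>k\<le>n. g (Suc k))" by (rule sum.atMost_Suc_shift)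
    moreover have "(\<Sum>k\<le>Suc n. g k) = (\<Sum>k\<le>n. g k)" by (simp add: g_def f0)
    ultimately show ?thesis by simp
  qed
  also have "g 0 = f 0 * c 0" by (simp add: g_def)
  also have "f 0 * c 0 + (\<Sum>k\<le>n. f k * c (Suc k)) + ((\<Sum>k\<le>n. g k) - f 0 * c 0)
      = (\<Sum>k\<le>n. f k * (c (Suc k) + qint qX (r * k + 1) * c k))"
    by (simp add: g_def sum.distrib algebra_simps)
  also have "\<dots> = (\<Sum>k\<le>n. x * (f k * c k))"
    by (rule sum.cong) (simp_all add: cS algebra_simps)
  also have "\<dots> = x * qint qX (r * m + 1) ^ n"
    using Suc by (simp add: sum_distrib_left f_def c_def)
  finally show ?case by (simp add: x_def)
qed

lemma sum_lin: "(\<Sum>i<k. r * i + 1) = r * (k choose 2) + (k::nat)"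
proof (induction k)
  case 0 then show ?case by simp
next
  case (Suc k)
  have "Suc k choose 2 = (k choose 2) + k"
    using binomial_Suc_Suc[of k 1] by (simp add: numeral_2_eq_2)
  then show ?case using Suc by (simp add: algebra_simps)
qed

lemma falling_qfact: "k \<le> m \<Longrightarrow> (\<Prod>i<k. qint Q (m - i)) * qfact Q (m - k) = qfact Q m"
proof (induction k)
  case 0 then show ?case by simp
next
  case (Suc k)
  have e: "m - k = Suc (m - Suc k)" using Suc.prems by simp
  have "(\<Prod>i<Suc k. qint Q (m - i)) * qfact Q (m - Suc k)
     = (\<Prod>i<k. qint Q (m - i)) * (qfact Q (m - Suc k) * qint Q (Suc (m - Suc k)))"
    using e by (simp add: algebra_simps)
  also have "\<dots> = (\<Prod>i<k. qint Q (m - i)) * qfact Q (m - k)"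
    using e by (simp add: qfact_Suc)
  finally show ?case using Suc by simp
qed

lemma falling_gb: "(\<Prod>i<k. qint (qX ^ r) (m - i)) = qfact (qX ^ r) k * gb (qX ^ r) m k"
proof (cases "k \<le> m")
  case True
  have "(\<Prod>i<k. qint (qX ^ r) (m - i)) * qfact (qX ^ r) (m - k)
      = qfact (qX ^ r) k * gb (qX ^ r) m k * qfact (qX ^ r) (m - k)"
    using falling_qfact[OF True] gb_fact[OF True, of "qX ^ r"] by (simp add: ac_simps)
  then show ?thesis using qfact_nz[of r "m - k"] by simp
next
  case False
  then have "m \<in> {..<k}" by simp
  then have "(\<Prod>i<k. qint (qX ^ r) (m - i)) = 0"
    by (intro prod_zero) (auto intro!: bexI[of _ m])
  then show ?thesis using False by (simp add: gb_zero)
qed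

lemma cst_formula:
  "cst r m k = qX ^ (r * (k choose 2) + k) * qint qX r ^ k * qfact (qX ^ r) k * gb (qX ^ r) m k"
proof (cases "k \<le> m")
  case True
  have fac: "qint qX (r * m + 1) - qint qX (r * i + 1) = qX ^ (r * i + 1) * qint qX r * qint (qX ^ r) (m - i)"
    if "i < k" for i
  proof -
    have e: "r * m + 1 = (r * i + 1) + r * (m - i)" using that True by (simp add: algebra_simps diff_mult_distrib2)
    show ?thesis by (simp only: e qint_add qint_mult)
  qed
  have "cst r m k = (\<Prod>i<k. qX ^ (r * i + 1) * qint qX r * qint (qX ^ r) (m - i))"
    unfolding cst_def by (rule prod.cong[OF refl]) (rule fac, simp)
  also have "\<dots> = qX ^ (\<Sum>i<k. r * i + 1) * qint qX r ^ k * (\<Prod>i<k. qint (qX ^ r) (m - i))"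
    by (simp only: prod.distrib power_sum prod_constant card_lessThan)
  finally show ?thesis by (simp only: sum_lin falling_gb mult.assoc)
next
  case False
  then have "m \<in> {..<k}" by simp
  then have "cst r m k = 0" unfolding cst_def by (intro prod_zero) (auto intro!: bexI[of _ m])
  then show ?thesis using False by (simp add: gb_zero)
qed

definition Mset :: "nat \<Rightarrow> nat \<Rightarrow> (nat \<Rightarrow> nat) set" where
  "Mset n h = {\<mu>. (\<forall>j. \<mu> j \<le> h) \<and> (\<forall>j. 1 \<le> j \<longrightarrow> j < n \<longrightarrow> \<mu> (Suc j) \<le> \<mu> j)
       \<and> (\<forall>j. (j = 0 \<or> n < j) \<longrightarrow> \<mu> j = 0)}"

lemma Mset_finite: "finite (Mset n h)"
proof -
  have "Mset n h \<subseteq> {f. \<forall>x. (x \<in> {1..n} \<longrightarrow> f x \<in> {0..h}) \<and> (x \<notin> {1..n} \<longrightarrow> f x = 0)}"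
    unfolding Mset_def by (auto, metis Suc_leI neq0_conv)
  moreover have "finite \<dots>" by (rule finite_set_of_finite_funs) auto
  ultimately show ?thesis by (rule finite_subset)
qed

lemma Mset_mono: "\<mu> \<in> Mset n h \<Longrightarrow> 1 \<le> i \<Longrightarrow> i \<le> j \<Longrightarrow> j \<le> n \<Longrightarrow> \<mu> j \<le> \<mu> i"
proof (induction j)
  case 0 then show ?case by simp
next
  case (Suc j)
  show ?case
  proof (cases "i = Suc j")
    case True then show ?thesis by simp
  next
    case False
    then have "\<mu> j \<le> \<mu> i" using Suc by simp
    moreover have "\<mu> (Suc j) \<le> \<mu> j" using Suc.prems False unfolding Mset_def by auto
    ultimately show ?thesis by simp
  qed
qed

lemma gb_hockey: "gb (qX ^ r) (h + Suc n) (Suc n) = (\<Sum>t=0..h. (qX ^ r) ^ t * gb (qX ^ r) (t + n) n)"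
proof (induction h)
  case 0 then show ?case by simp
next
  case (Suc h)
  have "gb (qX ^ r) (Suc h + Suc n) (Suc n) = gb (qX ^ r) (Suc (h + Suc n)) (Suc n)" by simp
  also have "\<dots> = (qX ^ r) ^ (Suc h) * gb (qX ^ r) (Suc h + n) n + gb (qX ^ r) (h + Suc n) (Suc n)"
    by (subst gb_pascal2) simp
  finally show ?case using Suc by simp
qed

lemma Mset_sum: "(\<Sum>\<mu>\<in>Mset n h. (qX ^ r) ^ (\<Sum>j=1..n. \<mu> j)) = gb (qX ^ r) (h + n) n"
proof (induction n arbitrary: h)
  case 0
  have "Mset 0 h = {\<lambda>_. 0}" unfolding Mset_def by auto
  then show ?case by simp
next
  case (Suc n)
  define S where "S = Sigma {0..h} (\<lambda>t. Mset n t)"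
  have "(\<Sum>\<mu>\<in>Mset (Suc n) h. (qX ^ r) ^ (\<Sum>j=1..Suc n. \<mu> j))
      = (\<Sum>p\<in>S. (qX ^ r) ^ (fst p + (\<Sum>j=1..n. snd p j)))"
  proof (rule sum.reindex_bij_witness[where j = "\<lambda>\<mu>. (\<mu> 1, \<lambda>j. if j = 0 then 0 else \<mu> (Suc j))"
        and i = "\<lambda>p j. if j = 0 then 0 else if j = 1 then fst p else snd p (j - 1)"])
    fix \<mu> assume m: "\<mu> \<in> Mset (Suc n) h"
    show "(\<lambda>j. if j = 0 then 0 else if j = 1 then fst (\<mu> 1, \<lambda>j. if j = 0 then 0 else \<mu> (Suc j))
            else snd (\<mu> 1, \<lambda>j. if j = 0 then 0 else \<mu> (Suc j)) (j - 1)) = \<mu>"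
      using m unfolding Mset_def by (auto simp: fun_eq_iff)
    show "(\<mu> 1, \<lambda>j. if j = 0 then 0 else \<mu> (Suc j)) \<in> S"
    proof -
      have "\<mu> j \<le> \<mu> 1" if "1 \<le> j" "j \<le> Suc n" for j using Mset_mono[OF m, of 1 j] that by simp
      moreover have "\<mu> j = 0" if "j > Suc n" for j using m that unfolding Mset_def by auto
      ultimately have "\<mu> (Suc j) \<le> \<mu> 1" for j by (cases "Suc j \<le> Suc n") auto
      then show ?thesis using m unfolding S_def Mset_def by auto
    qed
    show "(qX ^ r) ^ (fst (\<mu> 1, \<lambda>j. if j = 0 then 0 else \<mu> (Suc j)) +
          (\<Sum>j = 1..n. snd (\<mu> 1, \<lambda>j. if j = 0 then 0 else \<mu> (Suc j)) j)) =
         (qX ^ r) ^ (\<Sum>j = 1..Suc n. \<mu> j)"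
    proof -
      have "(\<Sum>j = 1..Suc n. \<mu> j) = \<mu> 1 + (\<Sum>j = Suc 1..Suc n. \<mu> j)"
        by (rule sum.atLeast_Suc_atMost) simp
      also have "(\<Sum>j = Suc 1..Suc n. \<mu> j) = (\<Sum>j = 1..n. \<mu> (Suc j))"
        by (rule sum.shift_bounds_cl_Suc_ivl)
      finally show ?thesis by simp
    qed
  next
    fix p assume p: "p \<in> S"
    obtain t \<nu> where pe: "p = (t, \<nu>)" by (cases p)
    have t: "t \<le> h" and nu: "\<nu> \<in> Mset n t" using p pe unfolding S_def by auto
    show "(\<lambda>\<mu>. (\<mu> 1, \<lambda>j. if j = 0 then 0 else \<mu> (Suc j))) ((\<lambda>p j. if j = 0 then 0 else if j = 1 then fst p else snd p (j - 1)) p) = p"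
      using nu pe unfolding Mset_def by (auto simp: fun_eq_iff)
    have "\<nu> j \<le> t" for j using nu unfolding Mset_def by auto
    moreover have "\<nu> 1 \<le> t" using nu unfolding Mset_def by auto
    ultimately show "(\<lambda>j. if j = 0 then 0 else if j = 1 then fst p else snd p (j - 1)) \<in> Mset (Suc n) h"
    proof -
      define \<mu> where "\<mu> = (\<lambda>j. if j = 0 then 0 else if j = 1 then fst p else snd p (j - 1))"
      have nu': "\<forall>j. \<nu> j \<le> t" "\<forall>j. 1 \<le> j \<longrightarrow> j < n \<longrightarrow> \<nu> (Suc j) \<le> \<nu> j"
          "\<forall>j. (j = 0 \<or> n < j) \<longrightarrow> \<nu> j = 0" using nu unfolding Mset_def by auto
      have a: "\<mu> j \<le> h" for j using nu'(1) t unfolding \<mu>_def pe by (auto intro: order_trans)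
      have b: "\<mu> (Suc j) \<le> \<mu> j" if "1 \<le> j" "j < Suc n" for j
      proof (cases "j = 1")
        case True then show ?thesis using \<open>\<nu> 1 \<le> t\<close> unfolding \<mu>_def pe by simp
      next
        case False
        then have "\<nu> (Suc (j - 1)) \<le> \<nu> (j - 1)" using nu'(2)[rule_format, of "j - 1"] that by simp
        then show ?thesis using that False unfolding \<mu>_def pe by simp
      qed
      have c: "\<mu> j = 0" if "j = 0 \<or> Suc n < j" for j
        using that nu'(3) unfolding \<mu>_def pe by auto
      show ?thesis using a b c unfolding \<mu>_def[symmetric] Mset_def by blast
    qed
  qed
  also have "\<dots> = (\<Sum>t=0..h. (qX ^ r) ^ t * (\<Sum>\<nu>\<in>Mset n t. (qX ^ r) ^ (\<Sum>j=1..n. \<nu> j)))"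
  proof -
    have "(\<Sum>p\<in>S. (qX ^ r) ^ (fst p + (\<Sum>j=1..n. snd p j)))
        = (\<Sum>t=0..h. \<Sum>\<nu>\<in>Mset n t. (qX ^ r) ^ (t + (\<Sum>j=1..n. \<nu> j)))"
      unfolding S_def by (subst sum.Sigma) (auto simp: Mset_finite case_prod_beta)
    then show ?thesis by (simp add: power_add sum_distrib_left)
  qed
  also have "\<dots> = gb (qX ^ r) (h + Suc n) (Suc n)"
    by (simp only: Suc.IH gb_hockey)
  finally show ?case .
qed


lemma vandermonde:
  "gb (qX ^ r) (a + b) n = (\<Sum>j=0..n. (qX ^ r) ^ (j * (b + j - n)) * gb (qX ^ r) a j * gb (qX ^ r) b (n - j))"
proof (induction a arbitrary: n)
  case 0
  have "(\<Sum>j=0..n. (qX ^ r) ^ (j * (b + j - n)) * gb (qX ^ r) 0 j * gb (qX ^ r) b (n - j))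
      = (\<Sum>j\<in>{0}. (qX ^ r) ^ (j * (b + j - n)) * gb (qX ^ r) 0 j * gb (qX ^ r) b (n - j))"
    by (rule sum.mono_neutral_right) (auto simp: gb_zero)
  then show ?case by simp
next
  case (Suc a)
  let ?Q = "qX ^ r :: int poly"
  show ?case
  proof (cases n)
    case 0 then show ?thesis by simp
  next
    case (Suc n')
    define T where "T j = ?Q ^ (j * (b + j - n)) * gb ?Q a j * gb ?Q b (n - j)" for j
    define U where "U i = ?Q ^ (Suc i * (b + Suc i - n)) * (?Q ^ (a - i) * gb ?Q a i) * gb ?Q b (n' - i)" for i
    have U: "U i = ?Q ^ (a + b - n') * (?Q ^ (i * (b + i - n')) * gb ?Q a i * gb ?Q b (n' - i))" for i
    proof (cases "i \<le> a \<and> n' - i \<le> b")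
      case True
      obtain d where d: "b + i = n' + d" using True by (metis add.commute le_add_diff_inverse le_diff_conv)
      obtain e where e: "a = i + e" using True by (metis le_add_diff_inverse)
      have "b + Suc i - n = d" "b + i - n' = d" "a - i = e" "a + b - n' = e + d"
        using Suc d e by auto
      then have "Suc i * (b + Suc i - n) + (a - i) = (a + b - n') + i * (b + i - n')"
        by simp
      then have "?Q ^ (Suc i * (b + Suc i - n)) * ?Q ^ (a - i) = ?Q ^ (a + b - n') * ?Q ^ (i * (b + i - n'))"
        by (simp flip: power_add)
      then show ?thesis unfolding U_def by (simp add: ac_simps)
    next
      case False
      then have "gb ?Q a i = 0 \<or> gb ?Q b (n' - i) = 0" by (auto simp: gb_zero)
      then show ?thesis unfolding U_def by auto
    qed
    have "gb ?Q (Suc a + b) n = gb ?Q (Suc (a + b)) (Suc n')" using Suc by simp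
    also have "\<dots> = ?Q ^ (a + b - n') * gb ?Q (a + b) n' + gb ?Q (a + b) n"
      using Suc by (simp only: gb_pascal2)
    also have "\<dots> = (\<Sum>i=0..n'. U i) + (\<Sum>j=0..n. T j)"
      using Suc.IH[of n'] Suc.IH[of n] by (simp add: U sum_distrib_left T_def)
    also have "(\<Sum>j=0..n. T j) = T 0 + (\<Sum>i=0..n'. T (Suc i))"
      unfolding Suc by (simp only: sum.atLeast0_atMost_Suc_shift comp_def)
    also have "(\<Sum>i=0..n'. U i) + (T 0 + (\<Sum>i=0..n'. T (Suc i)))
        = (\<Sum>j=0..n. ?Q ^ (j * (b + j - n)) * gb ?Q (Suc a) j * gb ?Q b (n - j))"
    proof -
      define f where "f j = ?Q ^ (j * (b + j - n)) * gb ?Q (Suc a) j * gb ?Q b (n - j)" for j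
      have "(\<Sum>j=0..n. f j) = f 0 + (\<Sum>i=0..n'. f (Suc i))"
        unfolding Suc by (simp only: sum.atLeast0_atMost_Suc_shift comp_def)
      moreover have "f 0 = T 0" unfolding f_def T_def by simp
      moreover have "f (Suc i) = U i + T (Suc i)" for i
        unfolding f_def T_def U_def gb_pascal2 using Suc by (simp add: algebra_simps)
      ultimately show ?thesis unfolding f_def by (simp add: sum.distrib)
    qed
    finally show ?thesis .
  qed
qed

lemma triangular:
  fixes F G :: "nat \<Rightarrow> int poly"
  assumes "\<And>m. (\<Sum>k\<le>n. F k * gb Q m k) = (\<Sum>k\<le>n. G k * gb Q m k)"
  shows "k \<le> n \<Longrightarrow> F k = G k"
proof (induction k rule: less_induct)
  case (less k)
  have red: "(\<Sum>j\<le>n. H j * gb Q k j) = H k + (\<Sum>j<k. H j * gb Q k j)" for H :: "nat \<Rightarrow> int poly"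
  proof -
    have "(\<Sum>j\<le>n. H j * gb Q k j) = (\<Sum>j\<le>k. H j * gb Q k j)"
      using less.prems by (intro sum.mono_neutral_right) (auto simp: gb_zero)
    then show ?thesis by (simp add: lessThan_Suc_atMost[symmetric])
  qed
  have "(\<Sum>j<k. F j * gb Q k j) = (\<Sum>j<k. G j * gb Q k j)"
    using less by (intro sum.cong) auto
  then show ?case using assms[of k] red[of F] red[of G] by simp
qed

lemma monom1: "monom (1::int) e = qX ^ e"
  by (simp add: monom_altdef)


section \<open>Rank permutation\<close>

definition rk :: "(nat \<Rightarrow> nat) \<Rightarrow> nat \<Rightarrow> nat \<Rightarrow> nat" where
  "rk K n a = card {b \<in> {1..n}. K b < K a}"

definition tau :: "(nat \<Rightarrow> nat) \<Rightarrow> nat \<Rightarrow> nat \<Rightarrow> nat" where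
  "tau K n a = (if a \<in> {1..n} then Suc (rk K n a) else a)"

lemma rk_less_n: "a \<in> {1..n} \<Longrightarrow> rk K n a < n"
proof -
  assume a: "a \<in> {1..n}"
  have "{b \<in> {1..n}. K b < K a} \<subseteq> {1..n} - {a}" by auto
  then have "rk K n a \<le> card ({1..n} - {a})" unfolding rk_def by (intro card_mono) auto
  also have "\<dots> = n - 1" using a by simp
  finally have "rk K n a \<le> n - 1" .
  moreover have "1 \<le> a" "a \<le> n" using a by auto
  ultimately show ?thesis by linarith
qed

lemma rk_mono: "a \<in> {1..n} \<Longrightarrow> K a < K b \<Longrightarrow> rk K n a < rk K n b"
  unfolding rk_def by (intro psubset_card_mono) auto

lemma rk_mono_rev: "rk K n a < rk K n b \<Longrightarrow> K a < K b"
proof (rule ccontr)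
  assume "rk K n a < rk K n b" "\<not> K a < K b"
  then have "{c \<in> {1..n}. K c < K b} \<subseteq> {c \<in> {1..n}. K c < K a}" by auto
  then have "rk K n b \<le> rk K n a" unfolding rk_def by (intro card_mono) auto
  then show False using \<open>rk K n a < rk K n b\<close> by simp
qed

lemma tau_permutes:
  assumes inj: "inj_on K {1..n}"
  shows "tau K n permutes {1..n}"
proof (rule bij_imp_permutes)
  have inj': "inj_on (tau K n) {1..n}"
  proof (rule inj_onI)
    fix a b assume ab: "a \<in> {1..n}" "b \<in> {1..n}" "tau K n a = tau K n b"
    show "a = b"
    proof (rule ccontr)
      assume "a \<noteq> b"
      then have "K a \<noteq> K b" using inj ab(1,2) by (auto dest: inj_onD)
      then have "rk K n a \<noteq> rk K n b" using rk_mono[of a n K b] rk_mono[of b n K a] ab(1,2)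
        by (cases "K a < K b") auto
      then show False using ab unfolding tau_def by simp
    qed
  qed
  moreover have "tau K n ` {1..n} \<subseteq> {1..n}"
    using rk_less_n unfolding tau_def by (auto simp: Suc_le_eq)
  ultimately have "tau K n ` {1..n} = {1..n}" by (intro endo_inj_surj) auto
  then show "bij_betw (tau K n) {1..n} {1..n}" using inj' by (simp add: bij_betw_def)
  show "\<And>x. x \<notin> {1..n} \<Longrightarrow> tau K n x = x" by (auto simp: tau_def)
qed

lemma sorted_by_tau:
  assumes inj: "inj_on K {1..n}" and j: "1 \<le> j" "j < n"
  shows "K (inv (tau K n) j) < K (inv (tau K n) (Suc j))"
proof -
  have p: "tau K n permutes {1..n}" by (rule tau_permutes[OF inj])
  have "tau K n (inv (tau K n) j) = j" "tau K n (inv (tau K n) (Suc j)) = Suc j"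
    using permutes_inverses(1)[OF p] by auto
  moreover have "inv (tau K n) j \<in> {1..n}" "inv (tau K n) (Suc j) \<in> {1..n}"
    using permutes_in_image[OF permutes_inv[OF p]] j by auto
  ultimately have "rk K n (inv (tau K n) j) < rk K n (inv (tau K n) (Suc j))"
    unfolding tau_def by (auto split: if_splits)
  then show ?thesis by (rule rk_mono_rev)
qed

lemma mono_chain:
  fixes f :: "nat \<Rightarrow> nat"
  assumes "\<And>j. 1 \<le> j \<Longrightarrow> j < n \<Longrightarrow> f j < f (Suc j)"
  shows "1 \<le> i \<Longrightarrow> i < j \<Longrightarrow> j \<le> n \<Longrightarrow> f i < f j"
proof (induction j)
  case 0 then show ?case by simp
next
  case (Suc j)
  show ?case
  proof (cases "i = j")
    case True then show ?thesis using assms Suc.prems by simp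
  next
    case False
    then have "f i < f j" using Suc by simp
    also have "f j < f (Suc j)" using assms Suc.prems False by simp
    finally show ?thesis .
  qed
qed

lemma tau_unique:
  assumes inj: "inj_on K {1..n}" and s: "\<sigma> permutes {1..n}"
    and sorted: "\<And>j. 1 \<le> j \<Longrightarrow> j < n \<Longrightarrow> K (\<sigma> j) < K (\<sigma> (Suc j))"
  shows "inv (tau K n) = \<sigma>"
proof -
  have p: "tau K n permutes {1..n}" by (rule tau_permutes[OF inj])
  have lt: "K (\<sigma> i) < K (\<sigma> j)" if "1 \<le> i" "i < j" "j \<le> n" for i j
  proof -
    have "\<And>j. 1 \<le> j \<Longrightarrow> j < n \<Longrightarrow> (\<lambda>j. K (\<sigma> j)) j < (\<lambda>j. K (\<sigma> j)) (Suc j)"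
      using sorted by simp
    from mono_chain[where f="\<lambda>j. K (\<sigma> j)" and n=n, OF this] that show ?thesis by simp
  qed
  have tj: "tau K n (\<sigma> j) = j" if j: "j \<in> {1..n}" for j
  proof -
    have "{b \<in> {1..n}. K b < K (\<sigma> j)} = \<sigma> ` {1..<j}"
    proof
      show "{b \<in> {1..n}. K b < K (\<sigma> j)} \<subseteq> \<sigma> ` {1..<j}"
      proof
        fix b assume b: "b \<in> {b \<in> {1..n}. K b < K (\<sigma> j)}"
        obtain i where i: "i \<in> {1..n}" "b = \<sigma> i"
        proof -
          have "b \<in> \<sigma> ` {1..n}" using b permutes_image[OF s] by simp
          then show ?thesis using that by blast
        qed
        have "i < j"
        proof (rule ccontr)
          assume "\<not> i < j"
          then have "i = j \<or> j < i" by auto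
          then show False using lt[of j i] b i j by auto
        qed
        then show "b \<in> \<sigma> ` {1..<j}" using i by auto
      qed
      show "\<sigma> ` {1..<j} \<subseteq> {b \<in> {1..n}. K b < K (\<sigma> j)}"
      proof
        fix b assume "b \<in> \<sigma> ` {1..<j}"
        then obtain i where i: "i \<in> {1..<j}" "b = \<sigma> i" by blast
        then have "\<sigma> i \<in> {1..n}" using permutes_in_image[OF s, of i] j by auto
        then show "b \<in> {b \<in> {1..n}. K b < K (\<sigma> j)}" using lt[of i j] i j by auto
      qed
    qed
    moreover have "card (\<sigma> ` {1..<j}) = j - 1"
      using permutes_inj[OF s] by (simp add: card_image inj_on_subset)
    ultimately have "rk K n (\<sigma> j) = j - 1" unfolding rk_def by simp
    moreover have "\<sigma> j \<in> {1..n}" using permutes_in_image[OF s] j by simp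
    ultimately show ?thesis using j unfolding tau_def by simp
  qed
  show ?thesis
  proof
    fix x
    show "inv (tau K n) x = \<sigma> x"
    proof (cases "x \<in> {1..n}")
      case True then show ?thesis using permutes_inv_eq[OF p] tj by simp
    next
      case False
      then have "\<sigma> x = x" "tau K n x = x" using permutes_not_in[OF s] unfolding tau_def by auto
      then show ?thesis using permutes_inv_eq[OF p] by simp
    qed
  qed
qed

section \<open>Order on colored letters\<close>

definition crk :: "nat \<Rightarrow> nat \<Rightarrow> nat \<times> nat \<Rightarrow> nat" where
  "crk r n x = (if snd x = 0 then (n + 1) * r + fst x else (n + 1) * r - (fst x * r + snd x))"

lemma lex_mult:
  fixes a b c d r :: nat
  assumes "c < r" "d < r"
  shows "b * r + d < a * r + c \<longleftrightarrow> b < a \<or> (b = a \<and> d < c)"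
proof -
  have 1: "y * r + e < x * r + f" if "y < x" "e < r" for x y e f :: nat
  proof -
    have "y * r + e < Suc y * r" using that by simp
    also have "\<dots> \<le> x * r" using that by (intro mult_le_mono1) simp
    finally show ?thesis by simp
  qed
  show ?thesis
    using 1[of b a d c] 1[of a b c d] assms by (cases "a < b"; cases "b < a") auto
qed

lemma colored_lt_small: "a \<le> n \<Longrightarrow> c < r \<Longrightarrow> a * r + c < (n + 1) * (r::nat)"
proof -
  assume "a \<le> n" "c < r"
  then have "a * r + c < a * r + r" by simp
  also have "\<dots> = Suc a * r" by simp
  also have "\<dots> \<le> (n + 1) * r" using \<open>a \<le> n\<close> by (intro mult_le_mono1) simp
  finally show ?thesis .
qed

lemma crk_less:
  assumes "fst x \<le> n" "snd x < r" "fst x = 0 \<longrightarrow> snd x = 0"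
    and "fst y \<le> n" "snd y < r" "fst y = 0 \<longrightarrow> snd y = 0"
  shows "colored_less x y \<longleftrightarrow> crk r n x < crk r n y"
proof -
  obtain a c b d where x: "x = (a, c)" and y: "y = (b, d)" by (cases x, cases y)
  have s1: "a * r + c < (n + 1) * r" "b * r + d < (n + 1) * r"
    using assms x y colored_lt_small by auto
  show ?thesis
  proof (cases "c = 0")
    case True
    then show ?thesis using s1 x y unfolding colored_less_def crk_def by (cases "d = 0") auto
  next
    case False
    show ?thesis
    proof (cases "d = 0")
      case True
      then show ?thesis using s1 x y False unfolding colored_less_def crk_def by auto
    next
      case False
      have "colored_less x y \<longleftrightarrow> b * r + d < a * r + c"
        using lex_mult[where a=a and b=b and c=c and d=d and r=r] assms x y False \<open>c \<noteq> 0\<close> unfolding colored_less_def by auto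
      also have "\<dots> \<longleftrightarrow> crk r n x < crk r n y"
        using s1 x y False \<open>c \<noteq> 0\<close> unfolding crk_def by auto
      finally show ?thesis .
    qed
  qed
qed

lemma crk_inj:
  assumes "fst x \<le> n" "snd x < r" "fst x = 0 \<longrightarrow> snd x = 0"
    and "fst y \<le> n" "snd y < r" "fst y = 0 \<longrightarrow> snd y = 0"
    and "crk r n x = crk r n y"
  shows "x = y"
proof -
  obtain a c b d where x: "x = (a, c)" and y: "y = (b, d)" by (cases x, cases y)
  have s1: "a * r + c < (n + 1) * r" "b * r + d < (n + 1) * r"
    using assms x y colored_lt_small by auto
  show ?thesis
  proof (cases "c = 0"; cases "d = 0")
    assume "c = 0" "d = 0" then show ?thesis using assms(7) x y unfolding crk_def by simp
  next
    assume "c = 0" "d \<noteq> 0" then show ?thesis using assms(7) x y s1 unfolding crk_def by simp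
  next
    assume "c \<noteq> 0" "d = 0" then show ?thesis using assms(7) x y s1 unfolding crk_def by simp
  next
    assume cd: "c \<noteq> 0" "d \<noteq> 0"
    then have e: "a * r + c = b * r + d" using assms(7) x y s1 unfolding crk_def by simp
    have "c < r" "d < r" using assms x y by auto
    then have "\<not> (b < a \<or> (b = a \<and> d < c))" "\<not> (a < b \<or> (a = b \<and> c < d))"
      using lex_mult[where a=a and b=b and c=c and d=d and r=r] lex_mult[where a=b and b=a and c=d and d=c and r=r] e
      by auto
    then show ?thesis using x y by auto
  qed
qed

lemma crk_bound: "crk r n x < (n + 1) * r + n + 1" if "fst x \<le> n"
  using that unfolding crk_def by auto


definition dd :: "nat \<Rightarrow> (nat \<Rightarrow> nat) \<times> (nat \<Rightarrow> nat) \<Rightarrow> nat \<Rightarrow> nat" where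
  "dd n p j = card {i \<in> Des_r n p. j \<le> i}"

lemma Des_sub: "Des_r n p \<subseteq> {0..<n}"
  unfolding Des_r_def by (cases p) auto

lemma Des_finite[simp]: "finite (Des_r n p)"
  using Des_sub finite_subset by blast

lemma des_le: "des_r n p \<le> n"
proof -
  have "card (Des_r n p) \<le> card {0..<n}" by (rule card_mono) (simp, rule Des_sub)
  then show ?thesis unfolding des_r_def by simp
qed

lemma Des_iff: "i \<in> Des_r n (\<sigma>, z) \<longleftrightarrow> i < n \<and> colored_less (\<sigma> (Suc i), z (Suc i)) (\<sigma> i, z i)"
  unfolding Des_r_def by auto

lemma dd_ge: "n \<le> j \<Longrightarrow> dd n p j = 0"
proof -
  assume j: "n \<le> j"
  have "{i \<in> Des_r n p. j \<le> i} = {}" using Des_sub[of n p] j by fastforce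
  then show ?thesis unfolding dd_def by simp
qed

lemma dd_step: "dd n p j = (if j \<in> Des_r n p then 1 else 0) + dd n p (Suc j)"
proof (cases "j \<in> Des_r n p")
  case True
  have "{i \<in> Des_r n p. j \<le> i} = insert j {i \<in> Des_r n p. Suc j \<le> i}"
    using True by (auto simp: Suc_le_eq le_less)
  moreover have "j \<notin> {i \<in> Des_r n p. Suc j \<le> i}" by simp
  moreover have "finite {i \<in> Des_r n p. Suc j \<le> i}" by simp
  ultimately show ?thesis using True unfolding dd_def by simp
next
  case False
  have "{i \<in> Des_r n p. j \<le> i} = {i \<in> Des_r n p. Suc j \<le> i}"
    using False by (auto simp: Suc_le_eq le_less)
  then show ?thesis using False unfolding dd_def by simp
qed

lemma dd_0: "dd n p 0 = des_r n p"
  unfolding dd_def des_r_def by simp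

lemma dd_le: "dd n p j \<le> des_r n p"
  unfolding dd_def des_r_def by (rule card_mono) (simp, blast)

lemma dd_lt: "i < j \<Longrightarrow> i \<in> Des_r n p \<Longrightarrow> dd n p j < des_r n p"
proof -
  assume ij: "i < j" "i \<in> Des_r n p"
  have "{k \<in> Des_r n p. j \<le> k} \<subset> Des_r n p" using ij by (blast dest: leD)
  then show ?thesis unfolding dd_def des_r_def by (rule psubset_card_mono[rotated]) simp
qed

lemma dd_sum: "(\<Sum>j=1..n. dd n p j) = (\<Sum>i\<in>Des_r n p. i)"
proof -
  have "(\<Sum>j=1..n. dd n p j) = (\<Sum>j=1..n. \<Sum>i\<in>Des_r n p. if j \<le> i then 1 else 0)"
    unfolding dd_def by (simp add: sum.inter_filter[symmetric])
  also have "\<dots> = (\<Sum>i\<in>Des_r n p. \<Sum>j=1..n. if j \<le> i then 1 else 0)" by (rule sum.swap)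
  also have "\<dots> = (\<Sum>i\<in>Des_r n p. i)"
  proof (rule sum.cong[OF refl])
    fix i assume "i \<in> Des_r n p"
    then have i: "i < n" using Des_sub[of n p] by auto
    have "(\<Sum>j=1..n. if j \<le> i then 1 else 0) = card {j \<in> {1..n}. j \<le> i}"
      by (simp add: sum.inter_filter[symmetric])
    also have "{j \<in> {1..n}. j \<le> i} = {1..i}" using i by auto
    finally show "(\<Sum>j=1..n. if j \<le> i then 1 else (0::nat)) = i" by simp
  qed
  finally show ?thesis .
qed

lemma cp_D:
  assumes "(\<sigma>, z) \<in> colored_perms r n"
  shows "\<sigma> permutes {1..n}" "\<And>i. i \<in> {1..n} \<Longrightarrow> z i < r" "\<And>i. i \<notin> {1..n} \<Longrightarrow> z i = 0"
  using assms unfolding colored_perms_def by auto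

lemma colored_desc:
  assumes P: "(\<sigma>, z) \<in> colored_perms r n"
  shows "j \<le> n \<Longrightarrow> z j > 0 \<Longrightarrow> \<exists>i<j. i \<in> Des_r n (\<sigma>, z)"
proof (induction j)
  case 0 then show ?case using cp_D(3)[OF P, of 0] by simp
next
  case (Suc j)
  show ?case
  proof (cases "z j > 0")
    case True
    then obtain i where "i < j" "i \<in> Des_r n (\<sigma>, z)" using Suc.IH Suc.prems by auto
    then show ?thesis by (intro exI[of _ i]) auto
  next
    case False
    then have "j \<in> Des_r n (\<sigma>, z)" using Suc.prems unfolding Des_iff colored_less_def by auto
    then show ?thesis by blast
  qed
qed

definition Bk :: "nat \<Rightarrow> nat \<Rightarrow> nat" where "Bk r n = (n + 1) * r + n + 1"

definition Kw :: "nat \<Rightarrow> nat \<Rightarrow> nat \<Rightarrow> (nat \<Rightarrow> nat) \<Rightarrow> nat \<Rightarrow> nat" where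
  "Kw r n m w a = (m - w a div r) * Bk r n + crk r n (a, w a mod r)"

definition Phi :: "nat \<Rightarrow> nat \<Rightarrow> ((nat \<Rightarrow> nat) \<times> (nat \<Rightarrow> nat)) \<times> (nat \<Rightarrow> nat) \<Rightarrow> nat \<Rightarrow> nat" where
  "Phi r n p = (case p of ((\<sigma>, z), \<mu>) \<Rightarrow>
     (\<lambda>a\<in>{1..n}. r * (dd n (\<sigma>, z) (inv \<sigma> a) + \<mu> (inv \<sigma> a)) + z (inv \<sigma> a)))"

definition Psig :: "nat \<Rightarrow> nat \<Rightarrow> nat \<Rightarrow> (nat \<Rightarrow> nat) \<Rightarrow> nat \<Rightarrow> nat" where
  "Psig r n m w = inv (tau (Kw r n m w) n)"

definition Pz :: "nat \<Rightarrow> nat \<Rightarrow> nat \<Rightarrow> (nat \<Rightarrow> nat) \<Rightarrow> nat \<Rightarrow> nat" where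
  "Pz r n m w = (\<lambda>j. if j \<in> {1..n} then w (Psig r n m w j) mod r else 0)"

definition Psi :: "nat \<Rightarrow> nat \<Rightarrow> nat \<Rightarrow> (nat \<Rightarrow> nat) \<Rightarrow> ((nat \<Rightarrow> nat) \<times> (nat \<Rightarrow> nat)) \<times> (nat \<Rightarrow> nat)" where
  "Psi r n m w = ((Psig r n m w, Pz r n m w),
     (\<lambda>j. if j \<in> {1..n} then w (Psig r n m w j) div r - dd n (Psig r n m w, Pz r n m w) j else 0))"

definition Dom :: "nat \<Rightarrow> nat \<Rightarrow> nat \<Rightarrow> (((nat \<Rightarrow> nat) \<times> (nat \<Rightarrow> nat)) \<times> (nat \<Rightarrow> nat)) set" where
  "Dom r n m = Sigma {p \<in> colored_perms r n. des_r n p \<le> m} (\<lambda>p. Mset n (m - des_r n p))"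

definition Wset :: "nat \<Rightarrow> nat \<Rightarrow> nat \<Rightarrow> (nat \<Rightarrow> nat) set" where
  "Wset r n m = PiE {1..n} (\<lambda>_. {0..r * m})"

lemma key_lt:
  fixes B :: nat
  assumes "b2 < b1" "b1 \<le> m" "c1 < B"
  shows "(m - b1) * B + c1 < (m - b2) * B + c2"
proof -
  have "(m - b1) * B + c1 < Suc (m - b1) * B" using assms by simp
  also have "\<dots> \<le> (m - b2) * B" using assms by (intro mult_le_mono1) simp
  finally show ?thesis by simp
qed

lemma key_dec:
  fixes B :: nat
  assumes "(m - b1) * B + c1 < (m - b2) * B + c2" "b1 \<le> m" "b2 \<le> m" "c1 < B" "c2 < B"
  shows "b2 < b1 \<or> (b1 = b2 \<and> c1 < c2)"
proof -
  have "\<not> b1 < b2" using key_lt[of b1 b2 m c2 B c1] assms by auto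
  then show ?thesis using assms by (cases "b1 = b2") auto
qed

lemma Kw_inj:
  assumes r: "r \<ge> 1"
  shows "inj_on (Kw r n m w) {1..n}"
proof (rule inj_onI)
  fix a b assume ab: "a \<in> {1..n}" "b \<in> {1..n}" "Kw r n m w a = Kw r n m w b"
  let ?B = "Bk r n"
  have c: "crk r n (a, w a mod r) < ?B" "crk r n (b, w b mod r) < ?B"
    using ab crk_bound unfolding Bk_def by auto
  have "(crk r n (a, w a mod r) + (m - w a div r) * ?B) mod ?B = (crk r n (b, w b mod r) + (m - w b div r) * ?B) mod ?B"
    using ab(3) unfolding Kw_def by (simp add: add.commute)
  then have "crk r n (a, w a mod r) = crk r n (b, w b mod r)"
    using c by simp
  then have "(a, w a mod r) = (b, w b mod r)"
    by (rule crk_inj[rotated 6]) (use ab r in auto)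
  then show "a = b" by simp
qed

lemma Phi_val:
  assumes "(\<sigma>, z) \<in> colored_perms r n" "j \<in> {1..n}"
  shows "Phi r n ((\<sigma>, z), \<mu>) (\<sigma> j) = r * (dd n (\<sigma>, z) j + \<mu> j) + z j"
proof -
  have p: "\<sigma> permutes {1..n}" by (rule cp_D(1)[OF assms(1)])
  have "\<sigma> j \<in> {1..n}" using permutes_in_image[OF p] assms(2) by simp
  then show ?thesis unfolding Phi_def using permutes_inverses(2)[OF p] by simp
qed

lemma Dom_D:
  assumes "((\<sigma>, z), \<mu>) \<in> Dom r n m"
  shows "(\<sigma>, z) \<in> colored_perms r n" "des_r n (\<sigma>, z) \<le> m" "\<mu> \<in> Mset n (m - des_r n (\<sigma>, z))"
  using assms unfolding Dom_def by auto

lemma Phi_bound: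
  assumes r: "r \<ge> 1" and x: "((\<sigma>, z), \<mu>) \<in> Dom r n m" and j: "j \<in> {1..n}"
  shows "r * (dd n (\<sigma>, z) j + \<mu> j) + z j \<le> r * m"
proof -
  note P = Dom_D(1)[OF x]
  have mu: "\<mu> j \<le> m - des_r n (\<sigma>, z)" using Dom_D(3)[OF x] unfolding Mset_def by auto
  have dm: "des_r n (\<sigma>, z) \<le> m" by (rule Dom_D(2)[OF x])
  show ?thesis
  proof (cases "z j = 0")
    case True
    have "dd n (\<sigma>, z) j + \<mu> j \<le> m" using dd_le[of n "(\<sigma>, z)" j] mu dm by linarith
    then show ?thesis using True by simp
  next
    case False
    then obtain i where "i < j" "i \<in> Des_r n (\<sigma>, z)" using colored_desc[OF P, of j] j by auto
    then have "dd n (\<sigma>, z) j < des_r n (\<sigma>, z)" by (rule dd_lt)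
    then have le: "dd n (\<sigma>, z) j + \<mu> j + 1 \<le> m" using mu dm by linarith
    have "z j < r" using cp_D(2)[OF P j] .
    then have "r * (dd n (\<sigma>, z) j + \<mu> j) + z j < r * (dd n (\<sigma>, z) j + \<mu> j + 1)" by simp
    also have "\<dots> \<le> r * m" using le by (intro mult_le_mono2)
    finally show ?thesis by simp
  qed
qed

lemma Phi_in:
  assumes r: "r \<ge> 1" and x: "x \<in> Dom r n m"
  shows "Phi r n x \<in> Wset r n m"
proof -
  obtain \<sigma> z \<mu> where xe: "x = ((\<sigma>, z), \<mu>)" by (metis prod.collapse)
  note P = Dom_D(1)[OF x[unfolded xe]]
  have p: "\<sigma> permutes {1..n}" by (rule cp_D(1)[OF P])
  have "Phi r n x a \<in> {0..r * m}" if a: "a \<in> {1..n}" for a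
  proof -
    have j: "inv \<sigma> a \<in> {1..n}" using permutes_in_image[OF permutes_inv[OF p]] a by simp
    have "Phi r n x a = Phi r n x (\<sigma> (inv \<sigma> a))" using permutes_inverses(1)[OF p] by simp
    also have "\<dots> = r * (dd n (\<sigma>, z) (inv \<sigma> a) + \<mu> (inv \<sigma> a)) + z (inv \<sigma> a)"
      unfolding xe by (rule Phi_val[OF P j])
    finally show ?thesis using Phi_bound[OF r x[unfolded xe] j] by simp
  qed
  then show ?thesis unfolding Wset_def xe Phi_def by auto
qed

lemma Phi_weight:
  assumes x: "((\<sigma>, z), \<mu>) \<in> Dom r n m"
  shows "(\<Sum>a\<in>{1..n}. Phi r n ((\<sigma>, z), \<mu>) a) = fmaj_r r n (\<sigma>, z) + r * (\<Sum>j=1..n. \<mu> j)"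
proof -
  note P = Dom_D(1)[OF x]
  have p: "\<sigma> permutes {1..n}" by (rule cp_D(1)[OF P])
  define g where "g j = r * (dd n (\<sigma>, z) j + \<mu> j) + z j" for j
  have "(\<Sum>a\<in>{1..n}. Phi r n ((\<sigma>, z), \<mu>) a) = (\<Sum>a\<in>{1..n}. g (inv \<sigma> a))"
    unfolding Phi_def g_def by (rule sum.cong) auto
  also have "\<dots> = (\<Sum>j\<in>{1..n}. g j)"
    using sum.permute[OF permutes_inv[OF p], of g] by (simp add: comp_def)
  also have "\<dots> = r * (\<Sum>j=1..n. dd n (\<sigma>, z) j) + r * (\<Sum>j=1..n. \<mu> j) + (\<Sum>j=1..n. z j)"
    unfolding g_def by (simp add: sum.distrib sum_distrib_left algebra_simps)
  also have "\<dots> = fmaj_r r n (\<sigma>, z) + r * (\<Sum>j=1..n. \<mu> j)"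
    unfolding dd_sum fmaj_r_def by simp
  finally show ?thesis .
qed


lemma mono_seq:
  fixes f :: "nat \<Rightarrow> nat"
  assumes "\<And>j. 1 \<le> j \<Longrightarrow> j < n \<Longrightarrow> f (Suc j) \<le> f j"
  shows "1 \<le> i \<Longrightarrow> i \<le> j \<Longrightarrow> j \<le> n \<Longrightarrow> f j \<le> f i"
proof (induction j)
  case 0 then show ?case by simp
next
  case (Suc j)
  show ?case
  proof (cases "i = Suc j")
    case True then show ?thesis by simp
  next
    case False
    then have "f j \<le> f i" using Suc by simp
    moreover have "f (Suc j) \<le> f j" using assms Suc.prems False by simp
    ultimately show ?thesis by simp
  qed
qed

lemma letter_valid:
  assumes P: "(\<sigma>, z) \<in> colored_perms r n" and r: "r \<ge> 1" and j: "j \<le> n"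
  shows "fst (\<sigma> j, z j) \<le> n" "snd (\<sigma> j, z j) < r" "fst (\<sigma> j, z j) = 0 \<longrightarrow> snd (\<sigma> j, z j) = 0"
proof -
  have p: "\<sigma> permutes {1..n}" by (rule cp_D(1)[OF P])
  show "fst (\<sigma> j, z j) \<le> n"
  proof (cases "j = 0")
    case True then show ?thesis using permutes_not_in[OF p, of 0] by simp
  next
    case False then have "\<sigma> j \<in> {1..n}" using permutes_in_image[OF p, of j] j by simp
    then show ?thesis by simp
  qed
  show "snd (\<sigma> j, z j) < r"
    using cp_D(2)[OF P, of j] cp_D(3)[OF P, of j] r by (cases "j \<in> {1..n}") auto
  show "fst (\<sigma> j, z j) = 0 \<longrightarrow> snd (\<sigma> j, z j) = 0"
  proof (cases "j = 0")
    case True then show ?thesis using cp_D(3)[OF P, of 0] by simp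
  next
    case False then have "\<sigma> j \<in> {1..n}" using permutes_in_image[OF p, of j] j by simp
    then show ?thesis by simp
  qed
qed

lemma Psi_Phi:
  assumes r: "r \<ge> 1" and x: "x \<in> Dom r n m"
  shows "Psi r n m (Phi r n x) = x"
proof -
  obtain \<sigma> z \<mu> where xe: "x = ((\<sigma>, z), \<mu>)" by (metis prod.collapse)
  note x' = x[unfolded xe]
  note P = Dom_D(1)[OF x']
  have p: "\<sigma> permutes {1..n}" by (rule cp_D(1)[OF P])
  have M: "\<mu> \<in> Mset n (m - des_r n (\<sigma>, z))" by (rule Dom_D(3)[OF x'])
  define w where "w = Phi r n x"
  define b where "b j = dd n (\<sigma>, z) j + \<mu> j" for j
  have wv: "w (\<sigma> j) = r * b j + z j" if "j \<in> {1..n}" for j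
    unfolding w_def xe b_def by (rule Phi_val[OF P that])
  have zr: "z j < r" if "j \<in> {1..n}" for j using cp_D(2)[OF P that] .
  have wdiv: "w (\<sigma> j) div r = b j" and wmod: "w (\<sigma> j) mod r = z j" if "j \<in> {1..n}" for j
    using wv[OF that] zr[OF that] r by auto
  have bm: "b j \<le> m" if "j \<in> {1..n}" for j
  proof -
    have h: "r * b j + z j \<le> r * m" using Phi_bound[OF r x' that] unfolding b_def .
    have "r * b j \<le> r * m" using h by linarith
    then show ?thesis using r by simp
  qed
  have K: "Kw r n m w (\<sigma> j) = (m - b j) * Bk r n + crk r n (\<sigma> j, z j)" if "j \<in> {1..n}" for j
    unfolding Kw_def using wdiv[OF that] wmod[OF that] by simp
  have cB: "crk r n (\<sigma> j, z j) < Bk r n" if "j \<le> n" for j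
    using crk_bound[OF letter_valid(1)[OF P r that]] unfolding Bk_def by simp
  have sorted: "Kw r n m w (\<sigma> j) < Kw r n m w (\<sigma> (Suc j))" if j: "1 \<le> j" "j < n" for j
  proof -
    have j1: "j \<in> {1..n}" "Suc j \<in> {1..n}" using j by auto
    have mu: "\<mu> (Suc j) \<le> \<mu> j" using M j unfolding Mset_def by auto
    have ddj: "dd n (\<sigma>, z) j = (if j \<in> Des_r n (\<sigma>, z) then 1 else 0) + dd n (\<sigma>, z) (Suc j)"
      by (rule dd_step)
    show ?thesis
    proof (cases "b (Suc j) < b j")
      case True
      then show ?thesis unfolding K[OF j1(1)] K[OF j1(2)]
        using key_lt[OF True bm[OF j1(1)] cB[of j]] j by simp
    next
      case False
      then have eq: "b (Suc j) = b j" and nd: "j \<notin> Des_r n (\<sigma>, z)"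
        using mu ddj unfolding b_def by (auto split: if_splits)
      then have "\<not> colored_less (\<sigma> (Suc j), z (Suc j)) (\<sigma> j, z j)" using j Des_iff by auto
      then have "\<not> crk r n (\<sigma> (Suc j), z (Suc j)) < crk r n (\<sigma> j, z j)"
        using crk_less[OF letter_valid[OF P r, of "Suc j"] letter_valid[OF P r, of j]] j by simp
      moreover have "crk r n (\<sigma> (Suc j), z (Suc j)) \<noteq> crk r n (\<sigma> j, z j)"
      proof
        assume "crk r n (\<sigma> (Suc j), z (Suc j)) = crk r n (\<sigma> j, z j)"
        then have "(\<sigma> (Suc j), z (Suc j)) = (\<sigma> j, z j)"
          using crk_inj[OF letter_valid[OF P r, of "Suc j"] letter_valid[OF P r, of j]] j by simp
        then have "\<sigma> (Suc j) = \<sigma> j" by simp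
        then show False using permutes_inj[OF p] by (auto dest: injD)
      qed
      ultimately have "crk r n (\<sigma> j, z j) < crk r n (\<sigma> (Suc j), z (Suc j))" by simp
      then show ?thesis unfolding K[OF j1(1)] K[OF j1(2)] eq by simp
    qed
  qed
  have sig: "Psig r n m w = \<sigma>"
    unfolding Psig_def by (rule tau_unique[OF Kw_inj[OF r] p sorted])
  have zz: "Pz r n m w = z"
  proof
    fix j show "Pz r n m w j = z j"
      unfolding Pz_def sig using wmod cp_D(3)[OF P, of j] by auto
  qed
  have mm: "(\<lambda>j. if j \<in> {1..n} then w (Psig r n m w j) div r - dd n (Psig r n m w, Pz r n m w) j else 0) = \<mu>"
  proof
    fix j show "(if j \<in> {1..n} then w (Psig r n m w j) div r - dd n (Psig r n m w, Pz r n m w) j else 0) = \<mu> j"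
    proof (cases "j \<in> {1..n}")
      case True then show ?thesis unfolding sig zz using wdiv[OF True] unfolding b_def by simp
    next
      case False then have "j = 0 \<or> n < j" by auto
      then show ?thesis using False M unfolding Mset_def by auto
    qed
  qed
  show ?thesis unfolding Psi_def w_def[symmetric] using sig zz mm xe by simp
qed


lemma Psi_props:
  assumes r: "r \<ge> 1" and w: "w \<in> Wset r n m"
  defines "\<sigma> \<equiv> Psig r n m w" and "z \<equiv> Pz r n m w"
  shows "\<sigma> permutes {1..n}" "(\<sigma>, z) \<in> colored_perms r n"
    "\<And>j. j \<in> {1..n} \<Longrightarrow> dd n (\<sigma>, z) j \<le> w (\<sigma> j) div r"
    "\<And>j. j \<in> {1..n} \<Longrightarrow> w (\<sigma> j) = r * (w (\<sigma> j) div r) + z j"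
    "des_r n (\<sigma>, z) \<le> m"
    "snd (Psi r n m w) \<in> Mset n (m - des_r n (\<sigma>, z))"
proof -
  have tp: "tau (Kw r n m w) n permutes {1..n}" by (rule tau_permutes[OF Kw_inj[OF r]])
  show p: "\<sigma> permutes {1..n}" unfolding \<sigma>_def Psig_def by (rule permutes_inv[OF tp])
  have zr: "z j < r" "z j = w (\<sigma> j) mod r" if "j \<in> {1..n}" for j
    using that r unfolding z_def Pz_def \<sigma>_def by auto
  have z0: "z j = 0" if "j \<notin> {1..n}" for j using that unfolding z_def Pz_def by auto
  show P: "(\<sigma>, z) \<in> colored_perms r n" unfolding colored_perms_def using p zr z0 by auto
  define b where "b j = w (\<sigma> j) div r" for j
  have sj: "\<sigma> j \<in> {1..n}" if "j \<in> {1..n}" for j using permutes_in_image[OF p] that by simp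
  have wle: "w (\<sigma> j) \<le> r * m" if "j \<in> {1..n}" for j
    using w sj[OF that] unfolding Wset_def by auto
  show wv: "w (\<sigma> j) = r * (w (\<sigma> j) div r) + z j" if "j \<in> {1..n}" for j
    using zr(2)[OF that] by simp
  have bm: "b j \<le> m" if "j \<in> {1..n}" for j
  proof -
    have "r * b j \<le> r * m" using wv[OF that] wle[OF that] unfolding b_def by linarith
    then show ?thesis using r by simp
  qed
  have bm': "b j < m" if "j \<in> {1..n}" "z j > 0" for j
  proof -
    have "r * b j < r * m" using wv[OF that(1)] wle[OF that(1)] that(2) unfolding b_def by linarith
    then show ?thesis by simp
  qed
  have K: "Kw r n m w (\<sigma> j) = (m - b j) * Bk r n + crk r n (\<sigma> j, z j)" if "j \<in> {1..n}" for j
    unfolding Kw_def b_def using zr(2)[OF that] by simp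
  have cB: "crk r n (\<sigma> j, z j) < Bk r n" if "j \<in> {1..n}" for j
    using crk_bound[of "(\<sigma> j, z j)" n r] sj[OF that] unfolding Bk_def by simp
  have sorted: "Kw r n m w (\<sigma> j) < Kw r n m w (\<sigma> (Suc j))" if "1 \<le> j" "j < n" for j
    unfolding \<sigma>_def Psig_def by (rule sorted_by_tau[OF Kw_inj[OF r] that])
  have lv: "fst (\<sigma> j, z j) \<le> n" "snd (\<sigma> j, z j) < r" "fst (\<sigma> j, z j) = 0 \<longrightarrow> snd (\<sigma> j, z j) = 0"
    if "j \<in> {1..n}" for j using sj[OF that] zr[OF that] by auto
  have S1: "b (Suc j) + (if j \<in> Des_r n (\<sigma>, z) then 1 else 0) \<le> b j" if j: "1 \<le> j" "j < n" for j
  proof -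
    have j1: "j \<in> {1..n}" "Suc j \<in> {1..n}" using j by auto
    have "(m - b j) * Bk r n + crk r n (\<sigma> j, z j) < (m - b (Suc j)) * Bk r n + crk r n (\<sigma> (Suc j), z (Suc j))"
      using sorted[OF j] K[OF j1(1)] K[OF j1(2)] by simp
    from key_dec[OF this bm[OF j1(1)] bm[OF j1(2)] cB[OF j1(1)] cB[OF j1(2)]]
    have kd: "b (Suc j) < b j \<or> (b j = b (Suc j) \<and> crk r n (\<sigma> j, z j) < crk r n (\<sigma> (Suc j), z (Suc j)))" .
    show ?thesis
    proof (cases "j \<in> Des_r n (\<sigma>, z)")
      case True
      then have "colored_less (\<sigma> (Suc j), z (Suc j)) (\<sigma> j, z j)" using Des_iff by auto
      then have "crk r n (\<sigma> (Suc j), z (Suc j)) < crk r n (\<sigma> j, z j)"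
        using crk_less[OF lv[OF j1(2)] lv[OF j1(1)]] by simp
      then have "b (Suc j) < b j" using kd by auto
      then show ?thesis using True by simp
    next
      case False
      then show ?thesis using kd by auto
    qed
  qed
  have S2': "dd n (\<sigma>, z) (n - k) \<le> b (n - k)" if "k < n" for k
    using that
  proof (induction k)
    case 0 then show ?case using dd_ge[of n n] by simp
  next
    case (Suc k)
    define j where "j = n - Suc k"
    have j: "1 \<le> j" "j < n" "Suc j = n - k" using Suc.prems unfolding j_def by auto
    have "dd n (\<sigma>, z) j = (if j \<in> Des_r n (\<sigma>, z) then 1 else 0) + dd n (\<sigma>, z) (Suc j)" by (rule dd_step)
    also have "\<dots> \<le> (if j \<in> Des_r n (\<sigma>, z) then 1 else 0) + b (Suc j)"
      using Suc.IH Suc.prems j(3) by simp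
    also have "\<dots> \<le> b j" using S1[OF j(1,2)] by simp
    finally show ?case unfolding j_def .
  qed
  have S2: "dd n (\<sigma>, z) j \<le> b j" if "j \<in> {1..n}" for j
    using S2'[of "n - j"] that by auto
  then show "\<And>j. j \<in> {1..n} \<Longrightarrow> dd n (\<sigma>, z) j \<le> w (\<sigma> j) div r" unfolding b_def by simp
  define mu where "mu j = (if j \<in> {1..n} then b j - dd n (\<sigma>, z) j else 0)" for j
  have mu_eq: "snd (Psi r n m w) = mu"
    unfolding Psi_def mu_def b_def \<sigma>_def z_def by simp
  have dd0: "des_r n (\<sigma>, z) = (if 0 \<in> Des_r n (\<sigma>, z) then 1 else 0) + dd n (\<sigma>, z) 1"
    using dd_step[of n "(\<sigma>, z)" 0] dd_0[of n "(\<sigma>, z)"] by simp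
  have des_mu: "des_r n (\<sigma>, z) \<le> m \<and> (n \<ge> 1 \<longrightarrow> mu 1 \<le> m - des_r n (\<sigma>, z))"
  proof (cases "n = 0")
    case True then show ?thesis using des_le[of n "(\<sigma>, z)"] by simp
  next
    case False
    then have one: "1 \<in> {1..n}" by simp
    have s0: "\<sigma> 0 = 0" using permutes_not_in[OF p, of 0] by simp
    have "0 \<in> Des_r n (\<sigma>, z) \<longleftrightarrow> z 1 > 0"
      using False s0 z0[of 0] unfolding Des_iff colored_less_def by auto
    then show ?thesis using dd0 S2[OF one] bm[OF one] bm'[OF one] unfolding mu_def by auto
  qed
  then show "des_r n (\<sigma>, z) \<le> m" by simp
  have mono: "mu (Suc j) \<le> mu j" if j: "1 \<le> j" "j < n" for j
  proof -
    have j1: "j \<in> {1..n}" "Suc j \<in> {1..n}" using j by auto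
    have "dd n (\<sigma>, z) j = (if j \<in> Des_r n (\<sigma>, z) then 1 else 0) + dd n (\<sigma>, z) (Suc j)" by (rule dd_step)
    then show ?thesis using S1[OF j] S2[OF j1(2)] j1 unfolding mu_def by (auto split: if_splits)
  qed
  have bound: "mu j \<le> m - des_r n (\<sigma>, z)" for j
  proof (cases "j \<in> {1..n}")
    case True
    have "mu j \<le> mu 1" using mono_seq[of n mu 1 j, OF mono] True by auto
    then show ?thesis using des_mu True by auto
  next
    case False then show ?thesis unfolding mu_def if_not_P[OF False] by simp
  qed
  show "snd (Psi r n m w) \<in> Mset n (m - des_r n (\<sigma>, z))"
    unfolding mu_eq Mset_def by (intro CollectI conjI allI impI bound mono) (auto simp: mu_def)
qed

lemma Psi_in:
  assumes r: "r \<ge> 1" and w: "w \<in> Wset r n m"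
  shows "Psi r n m w \<in> Dom r n m"
proof -
  note PP = Psi_props[OF r w]
  have e: "Psi r n m w = ((Psig r n m w, Pz r n m w), snd (Psi r n m w))" by (simp add: Psi_def)
  show ?thesis unfolding Dom_def by (subst e, rule SigmaI) (use PP(2,5,6) in auto)
qed

lemma Phi_apply: "a \<in> {1..n} \<Longrightarrow> Phi r n ((\<sigma>, z), \<mu>) a = r * (dd n (\<sigma>, z) (inv \<sigma> a) + \<mu> (inv \<sigma> a)) + z (inv \<sigma> a)"
  unfolding Phi_def by simp

lemma Phi_out: "a \<notin> {1..n} \<Longrightarrow> Phi r n p a = undefined"
  unfolding Phi_def by (cases p) auto

lemma Phi_Psi:
  assumes r: "r \<ge> 1" and w: "w \<in> Wset r n m"
  shows "Phi r n (Psi r n m w) = w"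
proof
  fix a
  note PP = Psi_props[OF r w]
  define \<sigma> where "\<sigma> = Psig r n m w"
  define z where "z = Pz r n m w"
  define \<mu> where "\<mu> = (\<lambda>j. if j \<in> {1..n} then w (\<sigma> j) div r - dd n (\<sigma>, z) j else 0)"
  have pe: "Psi r n m w = ((\<sigma>, z), \<mu>)" unfolding Psi_def \<sigma>_def z_def \<mu>_def by (rule refl)
  have p: "\<sigma> permutes {1..n}" using PP(1) unfolding \<sigma>_def .
  show "Phi r n (Psi r n m w) a = w a"
  proof (cases "a \<in> {1..n}")
    case True
    define j where "j = inv \<sigma> a"
    have j: "j \<in> {1..n}" "\<sigma> j = a"
      using permutes_in_image[OF permutes_inv[OF p]] True permutes_inverses(1)[OF p] unfolding j_def by auto
    have "Phi r n (Psi r n m w) a = r * (dd n (\<sigma>, z) j + \<mu> j) + z j"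
      unfolding pe Phi_apply[OF True] j_def ..
    also have "\<mu> j = w (\<sigma> j) div r - dd n (\<sigma>, z) j" unfolding \<mu>_def using j(1) by simp
    also have "r * (dd n (\<sigma>, z) j + (w (\<sigma> j) div r - dd n (\<sigma>, z) j)) + z j = r * (w (\<sigma> j) div r) + z j"
    proof -
      have "dd n (\<sigma>, z) j \<le> w (\<sigma> j) div r" using PP(3)[OF j(1)] unfolding \<sigma>_def z_def .
      then show ?thesis by simp
    qed
    also have "\<dots> = w (\<sigma> j)"
    proof -
      have "w (\<sigma> j) = r * (w (\<sigma> j) div r) + z j" using PP(4)[OF j(1)] unfolding \<sigma>_def z_def .
      then show ?thesis by (rule sym)
    qed
    finally show ?thesis unfolding j(2) .
  next
    case False
    have "w a = undefined" using w False unfolding Wset_def by (rule PiE_arb)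
    moreover have "Phi r n (Psi r n m w) a = undefined" using False by (rule Phi_out)
    ultimately show ?thesis by simp
  qed
qed


lemma cp_finite: "finite (colored_perms r n)"
proof -
  have "colored_perms r n \<subseteq> {\<sigma>. \<sigma> permutes {1..n}} \<times> {z. \<forall>x. (x \<in> {1..n} \<longrightarrow> z x \<in> {..<r}) \<and> (x \<notin> {1..n} \<longrightarrow> z x = 0)}"
    unfolding colored_perms_def by auto
  moreover have "finite ({\<sigma>. \<sigma> permutes {1..n}} \<times> {z. \<forall>x. (x \<in> {1..n} \<longrightarrow> z x \<in> {..<r}) \<and> (x \<notin> {1..n} \<longrightarrow> z x = 0)})"
    by (intro finite_cartesian_product finite_permutations finite_set_of_finite_funs) auto
  ultimately show ?thesis by (rule finite_subset)
qed

lemma worpitzky: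
  assumes r: "r \<ge> 1"
  shows "qint qX (r * m + 1) ^ n = (\<Sum>l=0..n. Acol r n l * gb (qX ^ r) (m + n - l) n)"
proof -
  let ?Q = "qX ^ r :: int poly"
  let ?P = "colored_perms r n"
  define G where "G l = gb ?Q (m + n - l) n" for l
  have fP: "finite ?P" by (rule cp_finite)
  have "(\<Sum>l=0..n. Acol r n l * G l) = (\<Sum>l=0..n. \<Sum>p\<in>{p \<in> ?P. des_r n p = l}. qX ^ fmaj_r r n p * G (des_r n p))"
    unfolding Acol_def monom1 sum_distrib_right by (intro sum.cong refl) auto
  also have "\<dots> = (\<Sum>p\<in>?P. qX ^ fmaj_r r n p * G (des_r n p))"
    by (rule sum.group[OF fP]) (auto simp: des_le)
  also have "\<dots> = (\<Sum>p\<in>{p \<in> ?P. des_r n p \<le> m}. qX ^ fmaj_r r n p * G (des_r n p))"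
  proof (rule sum.mono_neutral_right[OF fP])
    show "{p \<in> ?P. des_r n p \<le> m} \<subseteq> ?P" by auto
    show "\<forall>p\<in>?P - {p \<in> ?P. des_r n p \<le> m}. qX ^ fmaj_r r n p * G (des_r n p) = 0"
    proof
      fix p assume "p \<in> ?P - {p \<in> ?P. des_r n p \<le> m}"
      then have "m < des_r n p" "des_r n p \<le> n" using des_le by auto
      then have "m + n - des_r n p < n" by linarith
      then show "qX ^ fmaj_r r n p * G (des_r n p) = 0" unfolding G_def by (simp add: gb_zero)
    qed
  qed
  also have "\<dots> = (\<Sum>p\<in>{p \<in> ?P. des_r n p \<le> m}. \<Sum>\<mu>\<in>Mset n (m - des_r n p). qX ^ (fmaj_r r n p + r * (\<Sum>j=1..n. \<mu> j)))"
  proof (rule sum.cong[OF refl])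
    fix p assume "p \<in> {p \<in> ?P. des_r n p \<le> m}"
    then have "m + n - des_r n p = (m - des_r n p) + n" by auto
    then have Gd: "G (des_r n p) = (\<Sum>\<mu>\<in>Mset n (m - des_r n p). ?Q ^ (\<Sum>j=1..n. \<mu> j))"
      unfolding G_def Mset_sum by simp
    show "qX ^ fmaj_r r n p * G (des_r n p) = (\<Sum>\<mu>\<in>Mset n (m - des_r n p). qX ^ (fmaj_r r n p + r * (\<Sum>j=1..n. \<mu> j)))"
    proof -
      have e: "qX ^ (fmaj_r r n p + r * s) = qX ^ fmaj_r r n p * ?Q ^ s" for s
        by (simp add: power_add power_mult)
      show ?thesis unfolding e using Gd by (simp only: sum_distrib_left)
    qed
  qed
  also have "\<dots> = (\<Sum>x\<in>Dom r n m. qX ^ (fmaj_r r n (fst x) + r * (\<Sum>j=1..n. snd x j)))"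
    unfolding Dom_def
    by (subst sum.Sigma) (auto simp: Mset_finite fP case_prod_beta)
  also have "\<dots> = (\<Sum>w\<in>Wset r n m. qX ^ (\<Sum>a\<in>{1..n}. w a))"
  proof (rule sum.reindex_bij_witness[where j = "Phi r n" and i = "Psi r n m"])
    fix x assume x: "x \<in> Dom r n m"
    show "Psi r n m (Phi r n x) = x" by (rule Psi_Phi[OF r x])
    show "Phi r n x \<in> Wset r n m" by (rule Phi_in[OF r x])
    obtain \<sigma> z \<mu> where xe: "x = ((\<sigma>, z), \<mu>)" by (metis prod.collapse)
    show "qX ^ (\<Sum>a\<in>{1..n}. Phi r n x a) = qX ^ (fmaj_r r n (fst x) + r * (\<Sum>j=1..n. snd x j))"
      using Phi_weight[OF x[unfolded xe]] xe by simp
  next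
    fix w assume w: "w \<in> Wset r n m"
    show "Phi r n (Psi r n m w) = w" by (rule Phi_Psi[OF r w])
    show "Psi r n m w \<in> Dom r n m" by (rule Psi_in[OF r w])
  qed
  also have "\<dots> = (\<Prod>a\<in>{1..n}. \<Sum>v\<in>{0..r * m}. qX ^ v)"
    unfolding Wset_def by (subst prod_sum_PiE) (auto simp: power_sum)
  also have "\<dots> = qint qX (r * m + 1) ^ n"
    by (simp add: qint_def atLeast0AtMost lessThan_Suc_atMost[symmetric])
  finally show ?thesis unfolding G_def ..
qed

theorem theorem4p2:
  fixes r n k :: nat
  assumes "r \<ge> 1" and "k \<le> n"
  shows "monom 1 (r * ((k + 1) choose 2) + k - r * k) * (qint qX r) ^ k
           * qfact (qX ^ r) k * Scol r n k
         = (\<Sum>l=0..k. monom 1 (r * k * (k - l)) * Acol r n l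
              * qbinom (qX ^ r) (n - l) (k - l))"
proof -
  let ?Q = "qX ^ r :: int poly"
  define L where "L k = qX ^ (r * (k choose 2) + k) * qint qX r ^ k * qfact ?Q k * Scol r n k" for k
  define R where "R k = (\<Sum>l=0..k. ?Q ^ (k * (k - l)) * Acol r n l * gb ?Q (n - l) (k - l))" for k
  have eq: "(\<Sum>k\<le>n. L k * gb ?Q m k) = (\<Sum>k\<le>n. R k * gb ?Q m k)" for m
  proof -
    have "(\<Sum>k\<le>n. L k * gb ?Q m k) = qint qX (r * m + 1) ^ n"
      unfolding stirling_expand L_def by (intro sum.cong) (simp_all add: cst_formula ac_simps)
    also have "\<dots> = (\<Sum>l=0..n. Acol r n l * gb ?Q (m + (n - l)) n)"
      unfolding worpitzky[OF assms(1)] by (rule sum.cong) auto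
    also have "\<dots> = (\<Sum>l=0..n. \<Sum>j=0..n. Acol r n l * (?Q ^ (j * ((n - l) + j - n)) * gb ?Q m j * gb ?Q (n - l) (n - j)))"
      by (rule sum.cong[OF refl], subst vandermonde, simp only: sum_distrib_left)
    also have "\<dots> = (\<Sum>j=0..n. \<Sum>l=0..n. Acol r n l * (?Q ^ (j * ((n - l) + j - n)) * gb ?Q m j * gb ?Q (n - l) (n - j)))"
      by (rule sum.swap)
    also have "\<dots> = (\<Sum>j\<le>n. R j * gb ?Q m j)"
    proof (rule sum.cong)
      fix j assume j: "j \<in> {..n}"
      have "(\<Sum>l=0..n. Acol r n l * (?Q ^ (j * ((n - l) + j - n)) * gb ?Q m j * gb ?Q (n - l) (n - j)))
          = (\<Sum>l=0..j. Acol r n l * (?Q ^ (j * ((n - l) + j - n)) * gb ?Q m j * gb ?Q (n - l) (n - j)))"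
        using j by (intro sum.mono_neutral_right) (auto simp: gb_zero)
      also have "\<dots> = (\<Sum>l=0..j. ?Q ^ (j * (j - l)) * Acol r n l * gb ?Q (n - l) (j - l)) * gb ?Q m j"
        unfolding sum_distrib_right
      proof (rule sum.cong)
        fix l assume l: "l \<in> {0..j}"
        have "gb ?Q (n - l) (n - j) = gb ?Q (n - l) (j - l)"
          using gb_sym[of "n - j" "n - l" r] l j by auto
        moreover have "(n - l) + j - n = j - l" using l j by auto
        ultimately show "Acol r n l * (?Q ^ (j * ((n - l) + j - n)) * gb ?Q m j * gb ?Q (n - l) (n - j))
            = ?Q ^ (j * (j - l)) * Acol r n l * gb ?Q (n - l) (j - l) * gb ?Q m j"
          by (simp add: ac_simps)
      qed simp
      finally show "(\<Sum>l=0..n. Acol r n l * (?Q ^ (j * ((n - l) + j - n)) * gb ?Q m j * gb ?Q (n - l) (n - j)))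
          = R j * gb ?Q m j" unfolding R_def .
    qed (auto)
    finally show ?thesis .
  qed
  have LR: "L k = R k" using triangular[OF eq assms(2)] .
  have e1: "r * ((k + 1) choose 2) + k - r * k = r * (k choose 2) + k"
  proof -
    have "(k + 1) choose 2 = (k choose 2) + k"
      using binomial_Suc_Suc[of k 1] by (simp add: numeral_2_eq_2)
    then show ?thesis by (simp add: algebra_simps)
  qed
  have "monom 1 (r * ((k + 1) choose 2) + k - r * k) * (qint qX r) ^ k * qfact (qX ^ r) k * Scol r n k = L k"
    unfolding L_def e1 monom1 ..
  also have "\<dots> = R k" by (rule LR)
  also have "\<dots> = (\<Sum>l=0..k. monom 1 (r * k * (k - l)) * Acol r n l * qbinom (qX ^ r) (n - l) (k - l))"
    unfolding R_def monom1
    by (intro sum.cong) (use assms(2) in \<open>simp_all add: qbinom_gb power_mult mult.assoc\<close>)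
  finally show ?thesis .
qed

end
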